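(* Let $w_1,\dots,w_N\in\mathbb{R}^d$, let $\mathcal{V}$ be a linear subspace of $\mathbb{S}^d$, and let $\mathcal{C}^*=\{\sum_{i=1}^N\lambda_iw_iw_i^T:\lambda_i\ge0\}$. Consider the linear program in the variables $X\in\mathbb{S}^d$, $\lambda,t\in\mathbb{R}^N$: $$\text{maximize }\sum_{i=1}^Nt_i\ \text{ subject to } X\in\mathcal{V},\ X=\sum_{i=1}^N\lambda_iw_iw_i^T,\ \lambda_i\ge t_i,\ 1\ge t_i\ge0\ (i=1,\dots,N).$$ For any optimal solution $(X,\lambda,t)$, $X\in\mathcal{V}\cap\mathcal{C}^*$ and $\operatorname{rank}X\ge\operatorname{rank}Y$ for all $Y\in\mathcal{V}\cap\mathcal{C}^*$.
   Context: $\mathbb{S}^d$ denotes the space of real symmetric $d\times d$ matrices. *)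

theory Defs
  imports "HOL-Analysis.Analysis"
begin

definition outer :: "real^'d \<Rightarrow> real^'d^'d" where
  "outer w = (\<chi> i j. w $ i * w $ j)"

definition dual_cone :: "(nat \<Rightarrow> real^'d) \<Rightarrow> nat \<Rightarrow> (real^'d^'d) set" where
  "dual_cone w N = {(\<Sum>i<N. l i *\<^sub>R outer (w i)) | l. \<forall>i<N. l i \<ge> 0}"

definition lp_feasible ::
  "(real^'d^'d) set \<Rightarrow> (nat \<Rightarrow> real^'d) \<Rightarrow> nat \<Rightarrow> real^'d^'d \<Rightarrow> (nat \<Rightarrow> real) \<Rightarrow> (nat \<Rightarrow> real) \<Rightarrow> bool" where
  "lp_feasible V w N X l t \<longleftrightarrow>
     X \<in> V \<and> X = (\<Sum>i<N. l i *\<^sub>R outer (w i)) \<and>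
     (\<forall>i<N. l i \<ge> t i \<and> 1 \<ge> t i \<and> t i \<ge> 0)"

definition lp_optimal ::
  "(real^'d^'d) set \<Rightarrow> (nat \<Rightarrow> real^'d) \<Rightarrow> nat \<Rightarrow> real^'d^'d \<Rightarrow> (nat \<Rightarrow> real) \<Rightarrow> (nat \<Rightarrow> real) \<Rightarrow> bool" where
  "lp_optimal V w N X l t \<longleftrightarrow>
     lp_feasible V w N X l t \<and>
     (\<forall>X' l' t'. lp_feasible V w N X' l' t' \<longrightarrow> (\<Sum>i<N. t' i) \<le> (\<Sum>i<N. t i))"

end

theory Submission imports Defs begin
lemma outer_mv: "outer w *v v = (w \<bullet> v) *\<^sub>R w"
  by (simp add: vec_eq_iff outer_def matrix_vector_mult_def inner_vec_def sum_distrib_left mult_ac)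
lemma sum_outer_mv: fixes N :: nat shows "(\<Sum>i<N. l i *\<^sub>R outer (w i)) *v v = (\<Sum>i<N. (l i * (w i \<bullet> v)) *\<^sub>R w i)"
  by (induction N) (simp_all add: matrix_vector_mult_add_rdistrib outer_mv scaleR_matrix_vector_assoc[symmetric])

lemma range_sub_span:
  fixes N :: nat and w :: "nat \<Rightarrow> real^'d"
  shows "range (\<lambda>v. (\<Sum>i<N. l i *\<^sub>R outer (w i)) *v v) \<subseteq> span {w i | i. i < N \<and> l i \<noteq> 0}"
proof
  fix y assume "y \<in> range (\<lambda>v. (\<Sum>i<N. l i *\<^sub>R outer (w i)) *v v)"
  then obtain v where y: "y = (\<Sum>i<N. (l i * (w i \<bullet> v)) *\<^sub>R w i)" by (auto simp: sum_outer_mv)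
  have "(\<Sum>i<N. (l i * (w i \<bullet> v)) *\<^sub>R w i) = (\<Sum>i\<in>{i. i<N \<and> l i \<noteq> 0}. (l i * (w i \<bullet> v)) *\<^sub>R w i)"
    by (rule sum.mono_neutral_right) auto
  also have "\<dots> \<in> span {w i | i. i < N \<and> l i \<noteq> 0}"
    by (intro span_sum span_scale span_base) auto
  finally show "y \<in> span {w i | i. i < N \<and> l i \<noteq> 0}" using y by simp
qed

lemma span_sub_range:
  fixes N :: nat and w :: "nat \<Rightarrow> real^'d"
  assumes nn: "\<forall>i<N. l i \<ge> 0"
  shows "span {w i | i. i < N \<and> l i \<noteq> 0} \<subseteq> range (\<lambda>v. (\<Sum>i<N. l i *\<^sub>R outer (w i)) *v v)"
proof -
  let ?X = "(\<Sum>i<N. l i *\<^sub>R outer (w i))"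
  let ?R = "range (\<lambda>v. ?X *v v)"
  have sR: "subspace ?R"
    by (rule linear_subspace_image[OF matrix_vector_mul_linear subspace_UNIV])
  have "w j \<in> ?R" if j: "j < N" "l j \<noteq> 0" for j
  proof -
    obtain p q where pq0: "p \<in> span ?R" "\<And>z. z \<in> span ?R \<Longrightarrow> orthogonal q z" "w j = p + q"
      using orthogonal_subspace_decomp_exists[of ?R "w j"] by blast
    have spR: "span ?R = ?R" using sR by (rule span_eq_iff[THEN iffD2])
    have pR: "p \<in> ?R" using pq0(1) spR by simp
    have orth: "\<And>z. z \<in> ?R \<Longrightarrow> q \<bullet> z = 0" using pq0(2) spR by (simp add: orthogonal_def)
    have "?X *v q \<in> ?R" by simp
    hence "q \<bullet> (?X *v q) = 0" by (rule orth)
    moreover have "q \<bullet> (?X *v q) = (\<Sum>i<N. l i * (w i \<bullet> q)^2)"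
      unfolding sum_outer_mv inner_sum_right inner_scaleR_right
      by (intro sum.cong refl) (simp add: power2_eq_square inner_commute)
    ultimately have "(\<Sum>i<N. l i * (w i \<bullet> q)^2) = 0" by simp
    hence "\<forall>i\<in>{..<N}. l i * (w i \<bullet> q)^2 = 0"
      using sum_nonneg_eq_0_iff[of "{..<N}" "\<lambda>i. l i * (w i \<bullet> q)^2"] nn by auto
    hence "w j \<bullet> q = 0" using j by auto
    moreover have "q \<bullet> p = 0" using pR by (rule orth)
    ultimately have "q \<bullet> q = 0" using pq0(3) by (simp add: inner_add_right inner_commute)
    hence "q = 0" by simp
    thus ?thesis using pq0(3) pR by simp
  qed
  thus ?thesis using sR by (intro span_minimal) auto
qed

theorem corollary3:
  fixes w :: "nat \<Rightarrow> real^'d" and N :: nat and V :: "(real^'d^'d) set"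
    and X :: "real^'d^'d" and l t :: "nat \<Rightarrow> real"
  assumes "subspace V"
    and "\<forall>A\<in>V. transpose A = A"
    and "lp_optimal V w N X l t"
  shows "X \<in> V \<inter> dual_cone w N \<and> (\<forall>Y\<in>V \<inter> dual_cone w N. rank Y \<le> rank X)"
proof -
  have XV: "X \<in> V" and Xe: "X = (\<Sum>i<N. l i *\<^sub>R outer (w i))"
    and tc: "\<forall>i<N. l i \<ge> t i \<and> 1 \<ge> t i \<and> t i \<ge> 0"
    and opt: "\<And>X' l' t'. lp_feasible V w N X' l' t' \<Longrightarrow> (\<Sum>i<N. t' i) \<le> (\<Sum>i<N. t i)"
    using assms(3) unfolding lp_optimal_def lp_feasible_def by blast+
  have lnn: "\<forall>i<N. l i \<ge> 0" using tc by force
  have Xc: "X \<in> dual_cone w N" unfolding dual_cone_def using Xe lnn by blast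
  have "rank Y \<le> rank X" if Y: "Y \<in> V \<inter> dual_cone w N" for Y
  proof -
    obtain m where Ye: "Y = (\<Sum>i<N. m i *\<^sub>R outer (w i))" and mnn: "\<forall>i<N. m i \<ge> 0"
      using Y unfolding dual_cone_def by blast
    have YV: "Y \<in> V" using Y by blast
    have sub: "\<forall>i<N. m i \<noteq> 0 \<longrightarrow> l i \<noteq> 0"
    proof (rule ccontr)
      assume "\<not> ?thesis"
      then obtain i0 where i0: "i0 < N" "m i0 \<noteq> 0" "l i0 = 0" by blast
      have mpos: "m i0 > 0" using i0 mnn by force
      define c where "c = 1 / m i0"
      have cpos: "c > 0" using mpos c_def by simp
      have cm: "c * m i0 = 1" using mpos c_def by simp
      define l' where "l' = (\<lambda>i. l i + c * m i)"
      define t' where "t' = t(i0 := 1)"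
      have "lp_feasible V w N (X + c *\<^sub>R Y) l' t'"
        unfolding lp_feasible_def
      proof (intro conjI allI impI)
        show "X + c *\<^sub>R Y \<in> V" using assms(1) XV YV by (simp add: subspace_add subspace_scale)
        show "X + c *\<^sub>R Y = (\<Sum>i<N. l' i *\<^sub>R outer (w i))"
          unfolding Xe Ye l'_def by (simp add: sum.distrib scaleR_sum_right scaleR_add_left)
        fix i assume i: "i < N"
        have "c * m i \<ge> 0" using cpos mnn i by simp
        then show "t' i \<le> l' i" "t' i \<le> 1" "0 \<le> t' i"
          using tc i cm i0 unfolding t'_def l'_def by auto
      qed
      hence le: "(\<Sum>i<N. t' i) \<le> (\<Sum>i<N. t i)" by (rule opt)
      have t0: "t i0 = 0" using tc i0 by force
      have "(\<Sum>i<N. t' i) = t' i0 + (\<Sum>i\<in>{..<N}-{i0}. t' i)"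
        using i0 by (simp add: sum.remove)
      also have "(\<Sum>i\<in>{..<N}-{i0}. t' i) = (\<Sum>i\<in>{..<N}-{i0}. t i)"
        unfolding t'_def by (intro sum.cong) auto
      also have "(\<Sum>i<N. t i) = t i0 + (\<Sum>i\<in>{..<N}-{i0}. t i)"
        using i0 by (simp add: sum.remove)
      ultimately show False using le t0 unfolding t'_def by simp
    qed
    have "range (\<lambda>v. Y *v v) \<subseteq> span {w i | i. i < N \<and> m i \<noteq> 0}"
      unfolding Ye by (rule range_sub_span)
    also have "\<dots> \<subseteq> span {w i | i. i < N \<and> l i \<noteq> 0}"
      using sub by (intro span_mono) blast
    also have "\<dots> \<subseteq> range (\<lambda>v. X *v v)"
      unfolding Xe using lnn by (rule span_sub_range)
    finally have "dim (range (\<lambda>v. Y *v v)) \<le> dim (range (\<lambda>v. X *v v))" by (rule dim_subset)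
    thus ?thesis by (simp add: rank_dim_range)
  qed
  thus ?thesis using XV Xc by blast
qed
end
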